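(* Let $H=(\mathbb R^n,E)$ be an algebraic $k$-hypergraph, let $P$ be a $d$-dimensional $k$-template, and suppose $L(\mathbb R^d,P)$ is immersible in $H$. Then $H$ contains an $L(\mathbb R^d,P)$.
   Context: Here $1\le d,n<\omega$, $2\le k<\omega$. A $k$-hypergraph $(V,E)$ has nonempty $V$ and $E$ a set of $k$-element subsets of $V$. A $(k,n)$-ary polynomial is a real polynomial $p(x_0,\dots,x_{k-1})$ with each $x_i$ an $n$-tuple of variables; its zero hypergraph is $(\mathbb R^n,E)$ where $E$ consists of the $k$-element sets $\{a_0,\dots,a_{k-1}\}\subseteq\mathbb R^n$ (distinct $a_i$) with $p(a_0,\dots,a_{k-1})=0$; a hypergraph is algebraic if it is such a zero hypergraph. A $d$-dimensional $k$-template is a set $P$ of $d$-tuples with $|P|=k$. If $P,Q$ are $d$-dimensional templates, $Q$ is a homomorphic image of $P$ if there is a surjection $f:P\to Q$ such that for all $x,y\in P$, $i<d$, $x_i=y_i$ implies $f(x)_i=f(y)_i$. For $X=X_0\times\cdots\times X_{d-1}$, $L(X,P)$ is the $k$-hypergraph with vertex set $X$ whose edges are the $k$-templates $Q\subseteq X$ that are homomorphic images of $P$. An open box in $\mathbb R^m$ is a product of $m$ nonempty open intervals. A function $g$ on $A=A_0\times\cdots\times A_{m-1}$ is one-to-one in each coordinate if whenever $i<m$ and $a,b\in A$ satisfy ($a_j=b_j$ iff $j\ne i$), then $g(a)\ne g(b)$. For an open box $B\subseteq\mathbb R^d$, an immersion of $L(B,P)$ into $H$ is a semialgebraic (semialgebraic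 graph) analytic function $f:B\to\mathbb R^n$ that is one-to-one in each coordinate and such that whenever $\{x_0,\dots,x_{k-1}\}$ is an edge of $L(B,P)$ and $f(x_0),\dots,f(x_{k-1})$ are pairwise distinct, $\{f(x_0),\dots,f(x_{k-1})\}\in E$. $L(\mathbb R^d,P)$ is immersible in $H$ if there is an open box $B\subseteq\mathbb R^d$ and an immersion of $L(B,P)$ into $H$. $H$ contains an $H_1=(V_1,E_1)$ if there is a map $V_1\to\mathbb R^n$ that is an isomorphism of $H_1$ onto a subhypergraph $(V',E')$ of $H$ ($V'\subseteq\mathbb R^n$, $E'\subseteq E$). *)

theory Defs
  imports "HOL-Analysis.Analysis"
begin

inductive mpoly_fun :: "'i set \<Rightarrow> (('i \<Rightarrow> real) \<Rightarrow> real) \<Rightarrow> bool" for I where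
  mp_const: "mpoly_fun I (\<lambda>x. c)"
| mp_var: "i \<in> I \<Longrightarrow> mpoly_fun I (\<lambda>x. x i)"
| mp_add: "mpoly_fun I p \<Longrightarrow> mpoly_fun I q \<Longrightarrow> mpoly_fun I (\<lambda>x. p x + q x)"
| mp_mult: "mpoly_fun I p \<Longrightarrow> mpoly_fun I q \<Longrightarrow> mpoly_fun I (\<lambda>x. p x * q x)"

inductive semialgebraic :: "('i \<Rightarrow> real) set \<Rightarrow> bool" where
  sa_eq: "mpoly_fun UNIV p \<Longrightarrow> semialgebraic {x. p x = 0}"
| sa_pos: "mpoly_fun UNIV p \<Longrightarrow> semialgebraic {x. p x > 0}"
| sa_Un: "semialgebraic A \<Longrightarrow> semialgebraic B \<Longrightarrow> semialgebraic (A \<union> B)"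
| sa_Int: "semialgebraic A \<Longrightarrow> semialgebraic B \<Longrightarrow> semialgebraic (A \<inter> B)"
| sa_Compl: "semialgebraic A \<Longrightarrow> semialgebraic (- A)"

text \<open>A function on a set B in R^d to R^n is semialgebraic if its graph
  (a subset of R^(d+n), coordinates indexed by 'd + 'n) is semialgebraic.\<close>
definition semialgebraic_fun :: "(real^'d) set \<Rightarrow> (real^'d \<Rightarrow> real^'n) \<Rightarrow> bool" where
  "semialgebraic_fun B f \<longleftrightarrow>
     semialgebraic {z :: ('d + 'n) \<Rightarrow> real.
        (\<chi> i. z (Inl i)) \<in> B \<and> f (\<chi> i. z (Inl i)) = (\<chi> j. z (Inr j))}"

text \<open>Real analyticity: locally the sum of a (unconditionally, i.e. absolutely)
  convergent power series.\<close>
definition real_analytic_on :: "(real^'d) set \<Rightarrow> (real^'d \<Rightarrow> real^'n) \<Rightarrow> bool" where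
  "real_analytic_on B f \<longleftrightarrow>
     (\<forall>a\<in>B. \<exists>r>0. \<exists>c :: ('d \<Rightarrow> nat) \<Rightarrow> real^'n.
        \<forall>x\<in>ball a r \<inter> B.
          ((\<lambda>\<alpha>. (\<Prod>i\<in>UNIV. (x$i - a$i) ^ \<alpha> i) *\<^sub>R c \<alpha>) has_sum f x) UNIV)"

text \<open>Zero hypergraph of a (k,n)-ary polynomial p: the variables are indexed by
  pairs (i,j) with i < k, j a coordinate of R^n.\<close>
definition zero_edges :: "nat \<Rightarrow> (((nat \<times> 'n) \<Rightarrow> real) \<Rightarrow> real) \<Rightarrow> (real^'n) set set" where
  "zero_edges k p = {S. \<exists>a :: nat \<Rightarrow> real^'n. inj_on a {..<k} \<and> S = a ` {..<k}
                          \<and> p (\<lambda>(i,j). a i $ j) = 0}"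

definition algebraic_hypergraph :: "nat \<Rightarrow> (real^'n) set set \<Rightarrow> bool" where
  "algebraic_hypergraph k E \<longleftrightarrow>
     (\<exists>p. mpoly_fun ({..<k} \<times> UNIV) p \<and> E = zero_edges k p)"

definition hom_image :: "('a^'d) set \<Rightarrow> ('b^'d) set \<Rightarrow> bool" where
  "hom_image P Q \<longleftrightarrow> (\<exists>f. f ` P = Q \<and>
      (\<forall>x\<in>P. \<forall>y\<in>P. \<forall>i. x$i = y$i \<longrightarrow> f x $ i = f y $ i))"

definition L_edges :: "('b^'d) set \<Rightarrow> ('a^'d) set \<Rightarrow> ('b^'d) set set" where
  "L_edges X P = {Q. Q \<subseteq> X \<and> finite Q \<and> card Q = card P \<and> hom_image P Q}"

definition open_box :: "(real^'d) set \<Rightarrow> bool" where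
  "open_box B \<longleftrightarrow> (\<exists>a b. (\<forall>i. a$i < b$i) \<and> B = {x. \<forall>i. a$i < x$i \<and> x$i < b$i})"

definition one_one_each_coord :: "('b^'d) set \<Rightarrow> ('b^'d \<Rightarrow> 'c) \<Rightarrow> bool" where
  "one_one_each_coord A g \<longleftrightarrow>
     (\<forall>i. \<forall>a\<in>A. \<forall>b\<in>A. (\<forall>j. a$j = b$j \<longleftrightarrow> j \<noteq> i) \<longrightarrow> g a \<noteq> g b)"

definition immersion :: "(real^'d) set \<Rightarrow> ('a^'d) set \<Rightarrow> (real^'n) set set
                           \<Rightarrow> (real^'d \<Rightarrow> real^'n) \<Rightarrow> bool" where
  "immersion B P E f \<longleftrightarrow>
     semialgebraic_fun B f \<and> real_analytic_on B f \<and> one_one_each_coord B f \<and>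
     (\<forall>Q\<in>L_edges B P. inj_on f Q \<longrightarrow> f ` Q \<in> E)"

definition immersible :: "('a^'d) set \<Rightarrow> (real^'n) set set \<Rightarrow> bool" where
  "immersible P E \<longleftrightarrow> (\<exists>(B :: (real^'d) set) f. open_box B \<and> immersion B P E f)"

definition contains :: "'v set \<Rightarrow> 'v set set \<Rightarrow> 'w set \<Rightarrow> 'w set set \<Rightarrow> bool" where
  "contains V E V1 E1 \<longleftrightarrow>
     (\<exists>g V' E'. V' \<subseteq> V \<and> E' \<subseteq> E \<and> (\<forall>e\<in>E'. e \<subseteq> V') \<and>
        bij_betw g V1 V' \<and> (\<forall>e. e \<subseteq> V1 \<longrightarrow> (e \<in> E1 \<longleftrightarrow> g ` e \<in> E')))"

end

theory Submission
  imports Defs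
begin


definition cbx :: "('d \<Rightarrow> 'k \<Rightarrow> real \<times> real) \<Rightarrow> ('d \<Rightarrow> 'k) \<Rightarrow> (real^'d) set" where
  "cbx C s = {u. \<forall>i. fst (C i (s i)) \<le> u$i \<and> u$i \<le> snd (C i (s i))}"

definition valid :: "real^'d \<Rightarrow> real^'d \<Rightarrow> ('d \<Rightarrow> 'k \<Rightarrow> real \<times> real) \<Rightarrow> bool" where
  "valid a b C \<longleftrightarrow> (\<forall>i k. a$i < fst (C i k) \<and> fst (C i k) < snd (C i k) \<and> snd (C i k) < b$i)"

definition subc :: "('d \<Rightarrow> 'k \<Rightarrow> real \<times> real) \<Rightarrow> ('d \<Rightarrow> 'k \<Rightarrow> real \<times> real) \<Rightarrow> bool" where
  "subc C D \<longleftrightarrow> (\<forall>i k. fst (C i k) \<le> fst (D i k) \<and> snd (D i k) \<le> snd (C i k))"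

definition goodp :: "(real^'d \<Rightarrow> 'b) \<Rightarrow> ('d \<Rightarrow> 'k \<Rightarrow> real \<times> real) \<Rightarrow> ('d \<Rightarrow> 'k) \<Rightarrow> ('d \<Rightarrow> 'k) \<Rightarrow> bool" where
  "goodp F C s t \<longleftrightarrow> (\<forall>u\<in>cbx C s. \<forall>v\<in>cbx C t. F u \<noteq> F v)"

lemma subc_trans: "subc C D \<Longrightarrow> subc D E \<Longrightarrow> subc C E"
  unfolding subc_def by (meson order_trans)

lemma cbx_mono: "subc C D \<Longrightarrow> cbx D s \<subseteq> cbx C s"
  unfolding subc_def cbx_def by (auto intro: order_trans)

lemma goodp_mono: "subc C D \<Longrightarrow> goodp F C s t \<Longrightarrow> goodp F D s t"
  unfolding goodp_def using cbx_mono by blast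

lemma one_pair:
  fixes F :: "real^'d \<Rightarrow> 'b::metric_space"
  assumes cont: "continuous_on (box a b) F" and inj1: "one_one_each_coord (box a b) F"
    and V: "valid a b C" and st: "s \<noteq> t"
  shows "\<exists>D. valid a b D \<and> subc C D \<and> goodp F D s t"
proof -
  obtain j0 where j0: "s j0 \<noteq> t j0" using st by auto
  define mid where "mid i k = (fst (C i k) + snd (C i k)) / 2" for i k
  have VV: "a$i < fst (C i k)" "fst (C i k) < snd (C i k)" "snd (C i k) < b$i" for i k
    using V unfolding valid_def by auto
  have midin: "fst (C i k) < mid i k" "mid i k < snd (C i k)" for i k
    using VV(2)[of i k] unfolding mid_def by auto
  define u0 :: "real^'d" where "u0 = (\<chi> i. mid i (s i))"
  define q where "q = (mid j0 (t j0) + snd (C j0 (t j0))) / 2"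
  have q: "mid j0 (t j0) < q" "q < snd (C j0 (t j0))" using midin[of j0 "t j0"] unfolding q_def by auto
  have q2: "fst (C j0 (t j0)) < q" using q midin[of j0 "t j0"] by linarith
  define w1 :: "real^'d" where "w1 = (\<chi> i. mid i (t i))"
  define w2 :: "real^'d" where "w2 = (\<chi> i. if i = j0 then q else mid i (t i))"
  have inbox: "x \<in> box a b" if "\<And>i. fst (C i (t i)) < x$i \<and> x$i < snd (C i (t i))" for x
    unfolding mem_box_cart using that VV by (meson order_less_trans)
  have u0b: "u0 \<in> box a b" unfolding mem_box_cart u0_def using VV midin
    by (metis order_less_trans vec_lambda_beta)
  have w1b: "w1 \<in> box a b" by (rule inbox) (simp add: w1_def midin)
  have w2b: "w2 \<in> box a b" by (rule inbox) (use midin q q2 VV in \<open>auto simp: w2_def\<close>)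
  have "F w1 \<noteq> F w2"
  proof -
    have "\<forall>j. w1$j = w2$j \<longleftrightarrow> j \<noteq> j0" using q by (auto simp: w1_def w2_def)
    then show ?thesis using inj1 w1b w2b unfolding one_one_each_coord_def by blast
  qed
  then obtain v0 where v0b: "v0 \<in> box a b" and v0F: "F v0 \<noteq> F u0"
    and v0t: "\<And>i. fst (C i (t i)) < v0$i \<and> v0$i < snd (C i (t i))"
    and v0m: "\<And>i. i \<noteq> j0 \<Longrightarrow> v0$i = mid i (t i)"
  proof (cases "F w1 = F u0")
    case True
    show ?thesis
    proof (rule that[of w2])
      show "w2 \<in> box a b" by (rule w2b)
      show "F w2 \<noteq> F u0" using True \<open>F w1 \<noteq> F w2\<close> by simp
      show "fst (C i (t i)) < w2$i \<and> w2$i < snd (C i (t i))" for i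
        using midin q q2 by (cases "i = j0") (auto simp: w2_def)
      show "i \<noteq> j0 \<Longrightarrow> w2$i = mid i (t i)" for i by (simp add: w2_def)
    qed
  next
    case False
    show ?thesis
    proof (rule that[of w1])
      show "w1 \<in> box a b" by (rule w1b)
      show "F w1 \<noteq> F u0" using False by simp
      show "fst (C i (t i)) < w1$i \<and> w1$i < snd (C i (t i))" for i
        using midin by (simp add: w1_def)
      show "i \<noteq> j0 \<Longrightarrow> w1$i = mid i (t i)" for i by (simp add: w1_def)
    qed
  qed
  define d where "d = dist (F u0) (F v0) / 2"
  have d: "d > 0" using v0F unfolding d_def by simp
  have "isCont F u0" "isCont F v0" using cont u0b v0b continuous_on_eq_continuous_at[OF open_box] by auto
  then obtain r1 r2 where r1: "r1 > 0" "\<And>x. dist x u0 < r1 \<Longrightarrow> dist (F x) (F u0) < d"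
    and r2: "r2 > 0" "\<And>x. dist x v0 < r2 \<Longrightarrow> dist (F x) (F v0) < d"
    unfolding continuous_at_eps_delta using d by blast
  define \<rho> where "\<rho> = min r1 r2 / (2 * real CARD('d))"
  have \<rho>: "\<rho> > 0" using r1 r2 unfolding \<rho>_def by simp
  have close: "dist x y < min r1 r2" if "\<And>i. \<bar>x$i - y$i\<bar> \<le> \<rho>" for x y :: "real^'d"
  proof -
    have "dist x y = norm (x - y)" by (simp add: dist_norm)
    also have "\<dots> \<le> (\<Sum>i\<in>UNIV. \<bar>(x - y) $ i\<bar>)" by (rule norm_le_l1_cart)
    also have "\<dots> \<le> real (card (UNIV :: 'd set)) * \<rho>"
      by (rule sum_bounded_above) (use that in simp)
    also have "\<dots> = min r1 r2 / 2" unfolding \<rho>_def by simp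
    also have "\<dots> < min r1 r2" using r1(1) r2(1) by (auto simp: min_def)
    finally show ?thesis .
  qed
  define D where "D i k = (if k = s i then (max (fst (C i k)) (u0$i - \<rho>), min (snd (C i k)) (u0$i + \<rho>))
     else if k = t i then (max (fst (C i k)) (v0$i - \<rho>), min (snd (C i k)) (v0$i + \<rho>)) else C i k)" for i k
  have u0s: "fst (C i (s i)) < u0$i \<and> u0$i < snd (C i (s i))" for i
    using midin unfolding u0_def by simp
  have "valid a b D"
    unfolding valid_def
  proof (intro allI)
    fix i k
    show "a $ i < fst (D i k) \<and> fst (D i k) < snd (D i k) \<and> snd (D i k) < b $ i"
    proof (cases "k = s i")
      case True
      then show ?thesis using VV[of i k] u0s[of i] \<rho> unfolding D_def
        by (auto simp: less_max_iff_disj max_less_iff_conj min_less_iff_conj)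
    next
      case F: False
      show ?thesis
      proof (cases "k = t i")
        case True
        then show ?thesis using F VV[of i k] v0t[of i] \<rho> unfolding D_def
          by (auto simp: less_max_iff_disj max_less_iff_conj min_less_iff_conj)
      next
        case False
        then show ?thesis using F VV[of i k] unfolding D_def by auto
      qed
    qed
  qed
  moreover have "subc C D" unfolding subc_def D_def by auto
  moreover have "goodp F D s t"
    unfolding goodp_def
  proof (intro ballI)
    fix u v assume u: "u \<in> cbx D s" and v: "v \<in> cbx D t"
    have "\<bar>u$i - u0$i\<bar> \<le> \<rho>" for i
    proof -
      have "fst (D i (s i)) \<le> u$i \<and> u$i \<le> snd (D i (s i))" using u unfolding cbx_def by auto
      then show ?thesis unfolding D_def by (auto simp: abs_le_iff)
    qed
    hence du: "dist (F u) (F u0) < d" using r1(2) close[of u u0] by simp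
    have "\<bar>v$i - v0$i\<bar> \<le> \<rho>" for i
    proof (cases "t i = s i")
      case True
      then have "i \<noteq> j0" using j0 by auto
      then have "v0$i = u0$i" using v0m True by (simp add: u0_def)
      have "fst (D i (t i)) \<le> v$i \<and> v$i \<le> snd (D i (t i))" using v unfolding cbx_def by auto
      then show ?thesis using True \<open>v0$i = u0$i\<close> unfolding D_def by (auto simp: abs_le_iff)
    next
      case False
      have "fst (D i (t i)) \<le> v$i \<and> v$i \<le> snd (D i (t i))" using v unfolding cbx_def by auto
      then show ?thesis using False unfolding D_def by (auto simp: abs_le_iff)
    qed
    hence dv: "dist (F v) (F v0) < d" using r2(2) close[of v v0] by simp
    show "F u \<noteq> F v"
    proof
      assume "F u = F v"
      then have "dist (F u0) (F v0) \<le> dist (F u) (F u0) + dist (F v) (F v0)"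
        by (metis dist_commute dist_triangle)
      then show False using du dv d_def by linarith
    qed
  qed
  ultimately show ?thesis by blast
qed


lemma many_pairs:
  fixes F :: "real^'d \<Rightarrow> 'b::metric_space"
  assumes cont: "continuous_on (box a b) F" and inj1: "one_one_each_coord (box a b) F"
  shows "finite PP \<Longrightarrow> (\<forall>p\<in>PP. fst p \<noteq> snd p) \<Longrightarrow> valid a b C \<Longrightarrow>
    \<exists>D. valid a b D \<and> subc C D \<and> (\<forall>p\<in>PP. goodp F D (fst p) (snd p))"
proof (induction PP arbitrary: C rule: finite_induct)
  case empty
  then show ?case by (intro exI[of _ C]) (auto simp: subc_def)
next
  case (insert p PP)
  then obtain D1 where D1: "valid a b D1" "subc C D1" "\<forall>p\<in>PP. goodp F D1 (fst p) (snd p)"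
    using insert.IH insert.prems by blast
  obtain D2 where D2: "valid a b D2" "subc D1 D2" "goodp F D2 (fst p) (snd p)"
    using one_pair[OF cont inj1 D1(1), of "fst p" "snd p"] insert.prems by auto
  show ?case
    using D1 D2 by (intro exI[of _ D2]) (auto intro: subc_trans goodp_mono)
qed

lemma finite_tuples: "finite {s :: 'd::finite \<Rightarrow> bool list. \<forall>i. length (s i) = m}"
proof -
  have "{s :: 'd \<Rightarrow> bool list. \<forall>i. length (s i) = m} \<subseteq> PiE UNIV (\<lambda>_. {xs. set xs \<subseteq> UNIV \<and> length xs = m})"
    by (auto simp: PiE_def extensional_def)
  moreover have "finite (PiE (UNIV::'d set) (\<lambda>_. {xs :: bool list. set xs \<subseteq> UNIV \<and> length xs = m}))"
    by (intro finite_PiE finite_lists_length_eq) auto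
  ultimately show ?thesis by (rule finite_subset)
qed

lemma core:
  fixes F :: "real^'d \<Rightarrow> 'b::metric_space"
  assumes ab: "\<forall>i. a$i < b$i"
    and cont: "continuous_on (box a b) F" and inj1: "one_one_each_coord (box a b) F"
  shows "\<exists>h :: 'd \<Rightarrow> (nat \<Rightarrow> bool) \<Rightarrow> real. (\<forall>\<sigma>. (\<chi> i. h i (\<sigma> i)) \<in> box a b) \<and>
           inj (\<lambda>\<sigma>. F (\<chi> i. h i (\<sigma> i)))"
proof -
  define P where "P n C \<longleftrightarrow> valid a b C \<and> (\<forall>s t. (\<forall>i. length (s i) = n) \<longrightarrow> (\<forall>i. length (t i) = n)
      \<longrightarrow> s \<noteq> t \<longrightarrow> goodp F C s t)" for n and C :: "'d \<Rightarrow> bool list \<Rightarrow> real \<times> real"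
  define Q where "Q (n::nat) C C' \<longleftrightarrow> (\<forall>i k. fst (C i (butlast k)) \<le> fst (C' i k) \<and> snd (C' i k) \<le> snd (C i (butlast k)))"
    for n and C C' :: "'d \<Rightarrow> bool list \<Rightarrow> real \<times> real"
  have "\<exists>Cs. \<forall>n. P n (Cs n) \<and> Q n (Cs n) (Cs (Suc n))"
  proof (rule dependent_nat_choice)
    define C0 :: "'d \<Rightarrow> bool list \<Rightarrow> real \<times> real" where
      "C0 i k = ((3 * a$i + b$i) / 4, (a$i + 3 * b$i) / 4)" for i k
    have "valid a b C0" unfolding valid_def C0_def using ab
      by (auto simp: field_simps)
    moreover have "s = t" if "\<forall>i. length (s i) = 0" "\<forall>i. length (t i) = (0::nat)" for s t :: "'d \<Rightarrow> bool list"
      using that by auto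
    ultimately show "\<exists>x. P 0 x" unfolding P_def by blast
  next
    fix C n assume PC: "P n C"
    define C0 where "C0 i k = C i (butlast k)" for i k
    have v0: "valid a b C0" using PC unfolding P_def valid_def C0_def by auto
    define T where "T = {s :: 'd \<Rightarrow> bool list. \<forall>i. length (s i) = Suc n}"
    have fT: "finite T" unfolding T_def by (rule finite_tuples)
    define PP where "PP = {p \<in> T \<times> T. fst p \<noteq> snd p}"
    have fPP: "finite PP" unfolding PP_def using fT by auto
    obtain D where D: "valid a b D" "subc C0 D" "\<forall>p\<in>PP. goodp F D (fst p) (snd p)"
      using many_pairs[OF cont inj1 fPP _ v0] unfolding PP_def by auto
    have "P (Suc n) D" unfolding P_def using D(1,3) unfolding PP_def T_def by auto
    moreover have "Q n C D" using D(2) unfolding Q_def subc_def C0_def by auto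
    ultimately show "\<exists>y. P (Suc n) y \<and> Q n C y" by blast
  qed
  then obtain Cs where Cs: "\<And>n. P n (Cs n)" "\<And>n. Q n (Cs n) (Cs (Suc n))" by blast
  define lo where "lo n i x = fst (Cs n i (map x [0..<n]))" for n i and x :: "nat \<Rightarrow> bool"
  define hi where "hi n i x = snd (Cs n i (map x [0..<n]))" for n i and x :: "nat \<Rightarrow> bool"
  have bl: "butlast (map x [0..<Suc n]) = map x [0..<n]" for x :: "nat \<Rightarrow> bool" and n by simp
  have loS: "lo n i x \<le> lo (Suc n) i x" for n i x
    using Cs(2)[of n] unfolding Q_def lo_def by (metis bl)
  have hiS: "hi (Suc n) i x \<le> hi n i x" for n i x
    using Cs(2)[of n] unfolding Q_def hi_def by (metis bl)
  have lohi: "a$i < lo n i x" "lo n i x < hi n i x" "hi n i x < b$i" for n i x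
    using Cs(1)[of n] unfolding P_def valid_def lo_def hi_def by auto
  have lomono: "m \<le> n \<Longrightarrow> lo m i x \<le> lo n i x" for m n i x
    using incseq_SucI[of "\<lambda>n. lo n i x", OF loS] by (simp add: incseq_def)
  have himono: "m \<le> n \<Longrightarrow> hi n i x \<le> hi m i x" for m n i x
    using decseq_SucI[of "\<lambda>n. hi n i x", OF hiS] by (simp add: decseq_def)
  have lo_hi: "lo n i x \<le> hi m i x" for n m i x
  proof -
    have "lo n i x \<le> lo (max n m) i x" by (rule lomono) simp
    also have "\<dots> \<le> hi (max n m) i x" using lohi(2) less_imp_le by blast
    also have "\<dots> \<le> hi m i x" by (rule himono) simp
    finally show ?thesis .
  qed
  define h where "h i x = (SUP n. lo n i x)" for i x
  have bdd: "bdd_above (range (\<lambda>n. lo n i x))" for i x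
    using lo_hi by (intro bdd_aboveI2) auto
  have hlo: "lo m i x \<le> h i x" for m i x unfolding h_def by (rule cSUP_upper[OF _ bdd]) simp
  have hhi: "h i x \<le> hi m i x" for m i x unfolding h_def by (rule cSUP_least) (auto intro: lo_hi)
  have inb: "(\<chi> i. h i (\<sigma> i)) \<in> box a b" for \<sigma>
    unfolding mem_box_cart vec_lambda_beta using lohi hlo hhi by (meson order_less_le_trans order_le_less_trans)
  have incbx: "(\<chi> i. h i (\<sigma> i)) \<in> cbx (Cs m) (\<lambda>i. map (\<sigma> i) [0..<m])" for \<sigma> m
    unfolding cbx_def using hlo hhi unfolding lo_def hi_def by auto
  have "inj (\<lambda>\<sigma>. F (\<chi> i. h i (\<sigma> i)))"
  proof (rule injI)
    fix \<sigma> \<tau> :: "'d \<Rightarrow> nat \<Rightarrow> bool"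
    assume eq: "F (\<chi> i. h i (\<sigma> i)) = F (\<chi> i. h i (\<tau> i))"
    show "\<sigma> = \<tau>"
    proof (rule ccontr)
      assume "\<sigma> \<noteq> \<tau>"
      then have "\<exists>i n. \<sigma> i n \<noteq> \<tau> i n" by (auto simp: fun_eq_iff)
      then obtain i n where ne: "\<sigma> i n \<noteq> \<tau> i n" by blast
      define s where "s = (\<lambda>i. map (\<sigma> i) [0..<Suc n])"
      define t where "t = (\<lambda>i. map (\<tau> i) [0..<Suc n])"
      have "s i ! n \<noteq> t i ! n" using ne unfolding s_def t_def by (simp del: upt_Suc)
      then have "s \<noteq> t" by auto
      then have "goodp F (Cs (Suc n)) s t" using Cs(1)[of "Suc n"] unfolding P_def s_def t_def by auto
      then show False using eq incbx[of \<sigma> "Suc n"] incbx[of \<tau> "Suc n"] unfolding goodp_def s_def t_def by blast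
    qed
  qed
  then show ?thesis using inb by blast
qed



lemma has_sum_finsum:
  fixes g :: "'j \<Rightarrow> 'a \<Rightarrow> real"
  shows "finite J \<Longrightarrow> (\<And>j. j \<in> J \<Longrightarrow> (g j has_sum S j) A) \<Longrightarrow> ((\<lambda>x. \<Sum>j\<in>J. g j x) has_sum (\<Sum>j\<in>J. S j)) A"
proof (induction J rule: finite_induct)
  case empty then show ?case by simp
next
  case (insert j J)
  then show ?case by (simp add: has_sum_add)
qed

lemma analytic_cont:
  fixes f :: "real^'d \<Rightarrow> real^'n"
  assumes an: "real_analytic_on B f" and opB: "open B"
  shows "continuous_on B f"
  unfolding continuous_on_eq_continuous_at[OF opB]
proof
  fix a assume aB: "a \<in> B"
  obtain r c where r: "r > 0" and hs: "\<And>x. x \<in> ball a r \<inter> B \<Longrightarrow>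
     ((\<lambda>\<alpha>. (\<Prod>i\<in>UNIV. (x$i - a$i) ^ \<alpha> i) *\<^sub>R c \<alpha>) has_sum f x) UNIV"
    using an aB unfolding real_analytic_on_def by blast
  obtain e where e: "e > 0" "ball a e \<subseteq> B" using opB aB openE by blast
  define T where "T x \<alpha> = (\<Prod>i\<in>UNIV. (x$i - a$i) ^ \<alpha> i) *\<^sub>R c \<alpha>" for x \<alpha>
  define \<rho> where "\<rho> = min r e / (2 * real CARD('d))"
  have \<rho>: "\<rho> > 0" using r e unfolding \<rho>_def by simp
  define x0 :: "real^'d" where "x0 = a + (\<chi> i. \<rho>)"
  have "dist x0 a = norm (\<chi> i. \<rho> :: real^'d)" by (simp add: x0_def dist_norm)
  also have "\<dots> \<le> (\<Sum>i\<in>UNIV. \<bar>(\<chi> i. \<rho> :: real^'d) $ i\<bar>)" by (rule norm_le_l1_cart)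
  also have "\<dots> = real CARD('d) * \<rho>" using \<rho> by simp
  also have "\<dots> = min r e / 2" unfolding \<rho>_def by simp
  also have "\<dots> < min r e" using r e by (auto simp: min_def)
  finally have "dist x0 a < min r e" .
  then have x0in: "x0 \<in> ball a r \<inter> B" using e by (auto simp: dist_commute)
  have Tx0: "T x0 \<alpha> = \<rho> ^ (\<Sum>i\<in>UNIV. \<alpha> i) *\<^sub>R c \<alpha>" for \<alpha>
    by (simp add: T_def x0_def power_sum)
  define M where "M \<alpha> = (\<Sum>j\<in>UNIV. \<bar>T x0 \<alpha> $ j\<bar>)" for \<alpha>
  have "(\<lambda>\<alpha>. \<bar>T x0 \<alpha> $ j\<bar>) summable_on UNIV" for j
  proof -
    have "(T x0 has_sum f x0) UNIV" using hs[OF x0in] unfolding T_def .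
    then have "(\<lambda>\<alpha>. T x0 \<alpha> $ j) summable_on UNIV"
      using summable_on_bounded_linear[OF bounded_linear_vec_nth] has_sum_imp_summable by blast
    then show ?thesis using summable_on_iff_abs_summable_on_real[of "\<lambda>\<alpha>. T x0 \<alpha> $ j" UNIV] by simp
  qed
  then have "(M has_sum (\<Sum>j\<in>UNIV. infsum (\<lambda>\<alpha>. \<bar>T x0 \<alpha> $ j\<bar>) UNIV)) UNIV"
    unfolding M_def by (intro has_sum_finsum) auto
  then obtain G where G: "(M has_sum G) UNIV" by blast
  have G0: "G \<ge> 0" using has_sum_nonneg[OF G] unfolding M_def by (auto intro: sum_nonneg)
  have fa: "f a = c (\<lambda>_. 0)"
  proof -
    have Ta: "T a \<alpha> = 0" if "\<alpha> \<noteq> (\<lambda>_. 0)" for \<alpha>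
    proof -
      have "\<exists>i. \<alpha> i \<noteq> 0" using that by (auto simp: fun_eq_iff)
      then obtain i where "\<alpha> i \<noteq> 0" by blast
      then have "(\<Prod>i\<in>UNIV. (a$i - a$i) ^ \<alpha> i) = 0" by (intro prod_zero) auto
      then show ?thesis by (simp add: T_def)
    qed
    have "(T a has_sum c (\<lambda>_. 0)) {\<lambda>_. 0}" using has_sum_finite[of "{\<lambda>_. 0}" "T a"] by (simp add: T_def)
    then have "(T a has_sum c (\<lambda>_. 0)) UNIV" by (subst has_sum_cong_neutral[where T="{\<lambda>_. 0}" and g="T a"]) (auto intro: Ta)
    moreover have "(T a has_sum f a) UNIV" using hs[of a] aB r unfolding T_def by simp
    ultimately show ?thesis using has_sum_unique by blast
  qed
  have bound: "norm (f y - f a) \<le> norm (y - a) / \<rho> * G"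
    if yin: "y \<in> ball a r \<inter> B" and yt: "norm (y - a) \<le> \<rho>" for y
  proof -
    define t where "t = norm (y - a)"
    have t0: "t \<ge> 0" unfolding t_def by simp
    have h1: "((\<lambda>\<alpha>. T y \<alpha> + - T a \<alpha>) has_sum (f y + - f a)) UNIV"
      using hs[OF yin] hs[of a] aB r unfolding T_def by (intro has_sum_add has_sum_uminus[THEN iffD2]) auto
    have h2: "((\<lambda>\<alpha>. t / \<rho> * M \<alpha>) has_sum (t / \<rho> * G)) UNIV" by (rule has_sum_cmult_right[OF G])
    have pt: "norm (T y \<alpha> + - T a \<alpha>) \<le> t / \<rho> * M \<alpha>" for \<alpha>
    proof (cases "\<alpha> = (\<lambda>_. 0)")
      case True
      then show ?thesis using t0 \<rho> by (simp add: T_def M_def sum_nonneg)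
    next
      case False
      have "\<exists>i. \<alpha> i \<noteq> 0" using False by (auto simp: fun_eq_iff)
      then obtain i0 where "\<alpha> i0 \<noteq> 0" by blast
      define m where "m = (\<Sum>i\<in>UNIV. \<alpha> i)"
      have "m \<ge> \<alpha> i0" unfolding m_def by (rule member_le_sum) auto
      then obtain m' where m': "m = Suc m'" using \<open>\<alpha> i0 \<noteq> 0\<close> by (cases m) auto
      have "(\<Prod>i\<in>UNIV. (a$i - a$i) ^ \<alpha> i) = 0" using \<open>\<alpha> i0 \<noteq> 0\<close> by (intro prod_zero) auto
      then have Ta: "T a \<alpha> = 0" by (simp add: T_def)
      have "\<bar>\<Prod>i\<in>UNIV. (y$i - a$i) ^ \<alpha> i\<bar> = (\<Prod>i\<in>UNIV. \<bar>y$i - a$i\<bar> ^ \<alpha> i)"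
        by (simp add: abs_prod power_abs)
      also have "\<dots> \<le> (\<Prod>i\<in>UNIV. t ^ \<alpha> i)"
      proof (rule prod_mono)
        fix i
        have "\<bar>y$i - a$i\<bar> \<le> t" unfolding t_def using component_le_norm_cart[of "y - a" i] by simp
        then show "0 \<le> \<bar>y$i - a$i\<bar> ^ \<alpha> i \<and> \<bar>y$i - a$i\<bar> ^ \<alpha> i \<le> t ^ \<alpha> i"
          by (simp add: power_mono)
      qed
      also have "\<dots> = t ^ m" unfolding m_def by (simp add: power_sum)
      also have "\<dots> \<le> t / \<rho> * \<rho> ^ m"
      proof -
        have "t ^ m' \<le> \<rho> ^ m'" using t0 yt unfolding t_def by (intro power_mono) auto
        then have "t * t ^ m' \<le> t * \<rho> ^ m'" using t0 by (rule mult_left_mono)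
        then show ?thesis using \<rho> by (simp add: m')
      qed
      finally have pb: "\<bar>\<Prod>i\<in>UNIV. (y$i - a$i) ^ \<alpha> i\<bar> \<le> t / \<rho> * \<rho> ^ m" .
      have "norm (T y \<alpha> + - T a \<alpha>) = norm (T y \<alpha>)" using Ta by simp
      also have "\<dots> = \<bar>\<Prod>i\<in>UNIV. (y$i - a$i) ^ \<alpha> i\<bar> * norm (c \<alpha>)"
        by (simp add: T_def)
      also have "\<dots> \<le> (t / \<rho> * \<rho> ^ m) * (\<Sum>j\<in>UNIV. \<bar>c \<alpha> $ j\<bar>)"
        by (rule mult_mono[OF pb norm_le_l1_cart]) (use t0 \<rho> in auto)
      also have "\<dots> = t / \<rho> * M \<alpha>"
        using \<rho> by (simp add: M_def Tx0 m_def abs_mult sum_distrib_left mult.assoc)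
      finally show ?thesis .
    qed
    have "norm (f y + - f a) \<le> t / \<rho> * G" by (rule norm_infsum_le[OF h1 h2 pt])
    then show ?thesis by (simp add: t_def)
  qed
  show "isCont f a"
    unfolding continuous_at_eps_delta
  proof (intro allI impI)
    fix \<epsilon> :: real assume \<epsilon>: "\<epsilon> > 0"
    define \<delta> where "\<delta> = min (min r e) (min \<rho> (\<rho> * \<epsilon> / (G + 1)))"
    have \<delta>: "\<delta> > 0" using r e \<rho> \<epsilon> G0 unfolding \<delta>_def by auto
    have "dist (f y) (f a) < \<epsilon>" if "dist y a < \<delta>" for y
    proof -
      have yin: "y \<in> ball a r \<inter> B" using that e unfolding \<delta>_def by (auto simp: dist_commute)
      have yt: "norm (y - a) \<le> \<rho>" using that unfolding \<delta>_def by (simp add: dist_norm)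
      have "dist (f y) (f a) \<le> norm (y - a) / \<rho> * G" using bound[OF yin yt] by (simp add: dist_norm)
      also have "\<dots> \<le> norm (y - a) / \<rho> * (G + 1)" using \<rho> by (intro mult_left_mono) auto
      also have "\<dots> < \<epsilon>"
      proof -
        have "norm (y - a) < \<rho> * \<epsilon> / (G + 1)" using that unfolding \<delta>_def by (simp add: dist_norm)
        then have "norm (y - a) * (G + 1) < \<rho> * \<epsilon>" using G0 by (simp add: field_simps)
        then show ?thesis using \<rho> G0 by (simp add: field_simps)
      qed
      finally show ?thesis .
    qed
    then show "\<exists>\<delta>>0. \<forall>x'. dist x' a < \<delta> \<longrightarrow> dist (f x') (f a) < \<epsilon>" using \<delta> by blast
  qed
qed


theorem lemma2p1:
  fixes k :: nat
    and E :: "(real^'n) set set"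
    and P :: "(real^'d) set"
  assumes "2 \<le> k"
    and "algebraic_hypergraph k E"
    and "finite P" and "card P = k"
    and "immersible P E"
  shows "contains (UNIV :: (real^'n) set) E (UNIV :: (real^'d) set) (L_edges (UNIV :: (real^'d) set) P)"
proof -
  obtain B and f :: "real^'d \<Rightarrow> real^'n" where oB: "open_box B" and im: "immersion B P E f"
    using assms(5) unfolding immersible_def by blast
  obtain a b where ab: "\<forall>i. a$i < b$i" and Bdef: "B = {x. \<forall>i. a$i < x$i \<and> x$i < b$i}"
    using oB unfolding open_box_def by blast
  have Bbox: "B = box a b" unfolding Bdef by (auto simp: mem_box_cart)
  have cont: "continuous_on (box a b) f"
    using analytic_cont[of B f] im open_box unfolding immersion_def Bbox by auto
  have inj1: "one_one_each_coord (box a b) f" using im unfolding immersion_def Bbox by auto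
  obtain h :: "'d \<Rightarrow> (nat \<Rightarrow> bool) \<Rightarrow> real" where hh: "(\<forall>\<sigma>. (\<chi> i. h i (\<sigma> i)) \<in> box a b) \<and> inj (\<lambda>\<sigma>. f (\<chi> i. h i (\<sigma> i)))"
    using core[OF ab cont inj1] by (rule exE)
  have hB: "\<forall>\<sigma>. (\<chi> i. h i (\<sigma> i)) \<in> box a b" and hinj: "inj (\<lambda>\<sigma>. f (\<chi> i. h i (\<sigma> i)))"
    using hh by simp_all
  define \<iota> :: "real \<Rightarrow> nat \<Rightarrow> bool" where "\<iota> x n = (real_of_rat (from_nat n) < x)" for x n
  have \<iota>inj: "inj \<iota>"
  proof (rule injI)
    fix x y assume eq: "\<iota> x = \<iota> y"
    show "x = y"
    proof (rule ccontr)
      assume "x \<noteq> y"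
      then consider "x < y" | "y < x" by linarith
      then show False
      proof cases
        case 1
        then obtain q where q: "x < real_of_rat q" "real_of_rat q < y" using of_rat_dense by blast
        have "\<iota> x (to_nat q) = \<iota> y (to_nat q)" using eq by simp
        then show False using q unfolding \<iota>_def by simp
      next
        case 2
        then obtain q where q: "y < real_of_rat q" "real_of_rat q < x" using of_rat_dense by blast
        have "\<iota> x (to_nat q) = \<iota> y (to_nat q)" using eq by simp
        then show False using q unfolding \<iota>_def by simp
      qed
    qed
  qed
  define \<phi> :: "real^'d \<Rightarrow> real^'d" where "\<phi> x = (\<chi> i. h i (\<iota> (x$i)))" for x
  define g where "g x = f (\<phi> x)" for x
  have ginj: "inj g"
  proof (rule injI)
    fix x y assume "g x = g y"
    then have "(\<lambda>i. \<iota> (x$i)) = (\<lambda>i. \<iota> (y$i))"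
      using hinj unfolding g_def \<phi>_def by (auto dest: injD)
    then have "\<iota> (x$i) = \<iota> (y$i)" for i by metis
    then have "x$i = y$i" for i using \<iota>inj by (auto dest: injD)
    then show "x = y" by (simp add: vec_eq_iff)
  qed
  have \<phi>inj: "inj \<phi>" using ginj unfolding g_def inj_def by auto
  have \<phi>B: "\<phi> x \<in> B" for x using hB[rule_format, of "\<lambda>i. \<iota> (x$i)"] unfolding \<phi>_def Bbox by simp
  have edge: "g ` Q \<in> E" if Q: "Q \<in> L_edges UNIV P" for Q
  proof -
    have fQ: "finite Q" and cQ: "card Q = card P" and hQ: "hom_image P Q"
      using Q unfolding L_edges_def by auto
    obtain fq where fq: "fq ` P = Q" "\<forall>x\<in>P. \<forall>y\<in>P. \<forall>i. x$i = y$i \<longrightarrow> fq x $ i = fq y $ i"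
      using hQ unfolding hom_image_def by blast
    have "\<phi> ` Q \<in> L_edges B P"
      unfolding L_edges_def
    proof (intro CollectI conjI)
      show "\<phi> ` Q \<subseteq> B" using \<phi>B by auto
      show "finite (\<phi> ` Q)" using fQ by simp
      show "card (\<phi> ` Q) = card P" using cQ card_image[OF inj_on_subset[OF \<phi>inj]] by simp
      show "hom_image P (\<phi> ` Q)"
        unfolding hom_image_def
      proof (intro exI[of _ "\<phi> \<circ> fq"] conjI)
        show "(\<phi> \<circ> fq) ` P = \<phi> ` Q" using fq(1) by (auto simp: image_comp)
        show "\<forall>x\<in>P. \<forall>y\<in>P. \<forall>i. x $ i = y $ i \<longrightarrow> (\<phi> \<circ> fq) x $ i = (\<phi> \<circ> fq) y $ i"
        proof (intro ballI allI impI)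
          fix x y i assume "x \<in> P" "y \<in> P" "x $ i = y $ i"
          then have "fq x $ i = fq y $ i" using fq(2) by blast
          then show "(\<phi> \<circ> fq) x $ i = (\<phi> \<circ> fq) y $ i" unfolding \<phi>_def by simp
        qed
      qed
    qed
    moreover have "inj_on f (\<phi> ` Q)"
      using ginj unfolding g_def by (auto simp: inj_on_def inj_def)
    ultimately have "f ` \<phi> ` Q \<in> E" using im unfolding immersion_def by blast
    then show ?thesis by (simp add: g_def image_image)
  qed
  show ?thesis
    unfolding contains_def
  proof (intro exI[of _ g] exI[of _ "range g"] exI[of _ "(\<lambda>e. g ` e) ` L_edges UNIV P"] conjI allI impI)
    show "range g \<subseteq> UNIV" by simp
    show "(\<lambda>e. g ` e) ` L_edges UNIV P \<subseteq> E" using edge by blast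
    show "\<forall>e\<in>(\<lambda>e. g ` e) ` L_edges UNIV P. e \<subseteq> range g" by blast
    show "bij_betw g UNIV (range g)" using ginj by (simp add: bij_betw_def)
    fix e :: "(real^'d) set"
    show "(e \<in> L_edges UNIV P) = (g ` e \<in> (\<lambda>e. g ` e) ` L_edges UNIV P)"
      using ginj by (auto simp: inj_image_eq_iff)
  qed
qed

end
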